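(* Let $f\colon M\to\mathbb R^3$ be a constant mean curvature surface ($H=1$) with Gauss map $N$ and coordinate frame $F$, in a conformal coordinate $z$ with induced metric $e^u|dz|^2$ and $Q=\langle f_{zz},N\rangle$. Let $F_\lambda\colon\tilde M\to\mathrm{Gl}(2,\mathbb C)$, $\lambda\in\mathbb C_*$, be an extended frame of $f$, i.e. a solution of \[F_\lambda^{-1}(F_\lambda)_z=\begin{pmatrix}-\frac{u_z}4 & Qe^{-u/2}\\ -\frac\lambda2 e^{u/2} & \frac{u_z}4\end{pmatrix},\qquad F_\lambda^{-1}(F_\lambda)_{\bar z}=\begin{pmatrix}\frac{u_{\bar z}}4 & \frac{\lambda^{-1}}2e^{u/2}\\ -\bar Qe^{-u/2} & -\frac{u_{\bar z}}4\end{pmatrix}\] with $F_{\lambda=1}=F$. Then the associated family of flat connections of $N$ is \[d_\lambda=F\cdot d^{F_\lambda}=F\circ\big(d+F_\lambda^{-1}dF_\lambda\big)\circ F^{-1}.\]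
   Context: Identify $\mathbb R^4=\mathbb H$, $\mathbb R^3=\mathrm{Im}\,\mathbb H$, $S^2=\{n\in\mathrm{Im}\,\mathbb H:n^2=-1\}$; identify $\mathbb H$ with matrices via $a_0+ja_1\mapsto\begin{pmatrix}a_0&-\bar a_1\\ a_1&\bar a_0\end{pmatrix}$ ($a_0,a_1\in\mathbb C$), which is left multiplication on $\mathbb C^2=(\mathbb H,I)$, $I$ = right multiplication by $i$, with basis $1,j$; then $\langle v,w\rangle=-\frac12\mathrm{tr}(vw)$ on $\mathbb R^3$. For a conformal immersion $f$ with conformal coordinate $z=x+iy$ and metric $e^u$, the coordinate frame is the (up to sign unique) $F\colon\tilde M\to SU(2)$ with $e^{-u/2}f_x=-iF\sigma_1F^{-1}$, $e^{-u/2}f_y=-iF\sigma_2F^{-1}$, $N=-iF\sigma_3F^{-1}$ ($\sigma_l$ the Pauli matrices), where the Gauss map satisfies $*df=N\,df=-df\,N$ with $*\omega(X)=\omega(J_MX)$. Mean curvature normalized $H=1$, so $(dN)'=\frac12(dN-N*dN)=-df$. $\underline{\mathbb H}=M\times\mathbb H$ has trivial connection $d$; $J$ is left multiplication by $N$, $A=\frac14(J\,dJ+*dJ)$, $A^{(1,0)}=\frac12(A-I*A)$, $A^{(0,1)}=\frac12(A+I*A)$; the associated family is $d_\lambda=d+(\lambda-1)A^{(1,0)}+(\lambda^{-1}-1)A^{(0,1)}$, $\lambda\in\mathbb C_*$. *)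

theory Defs
  imports "HOL-Analysis.Analysis"
begin

text \<open>2x2 complex matrices (endomorphisms of C^2 = (H, I) with basis 1, j) and C^2 vectors.\<close>
type_synonym cmat = "complex^2^2"
type_synonym cvec = "complex^2"

definition mat2 :: "complex \<Rightarrow> complex \<Rightarrow> complex \<Rightarrow> complex \<Rightarrow> cmat" where
  "mat2 a b c d = (\<chi> i j. if i = 1 then (if j = 1 then a else b) else (if j = 1 then c else d))"

definition smul :: "complex \<Rightarrow> cmat \<Rightarrow> cmat" where
  "smul c A = (\<chi> i j. c * A$i$j)"

definition ctr :: "cmat \<Rightarrow> complex" where
  "ctr A = A$1$1 + A$2$2"

definition cadj :: "cmat \<Rightarrow> cmat" where
  "cadj A = (\<chi> i j. cnj (A$j$i))"

definition sigma1 :: cmat where "sigma1 = mat2 0 1 1 0"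
definition sigma2 :: cmat where "sigma2 = mat2 0 (-\<i>) \<i> 0"
definition sigma3 :: cmat where "sigma3 = mat2 1 0 0 (-1)"

text \<open>Quaternion a0 + j a1 as a matrix; Im H; SU(2).\<close>
definition quat_mat :: "complex \<Rightarrow> complex \<Rightarrow> cmat" where
  "quat_mat a0 a1 = mat2 a0 (- cnj a1) a1 (cnj a0)"

definition ImH :: "cmat set" where
  "ImH = {quat_mat a0 a1 | a0 a1. Re a0 = 0}"

definition SU2 :: "cmat set" where
  "SU2 = {A. cadj A ** A = mat 1 \<and> det A = 1}"

text \<open>complex-bilinear extension of <v,w> = -1/2 tr(vw)\<close>
definition cinner :: "cmat \<Rightarrow> cmat \<Rightarrow> complex" where
  "cinner v w = - (1/2) * ctr (v ** w)"

text \<open>Directional (real) derivative of g at p in direction v (v a complex number viewed as a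
  tangent vector of the coordinate domain; v = 1 is d/dx, v = i is d/dy).\<close>
definition pd :: "(complex \<Rightarrow> 'a::real_normed_vector) \<Rightarrow> complex \<Rightarrow> complex \<Rightarrow> 'a" where
  "pd g p v = frechet_derivative g (at p) v"

definition dz :: "(complex \<Rightarrow> cmat) \<Rightarrow> complex \<Rightarrow> cmat" where
  "dz g p = smul (1/2) (pd g p 1 - smul \<i> (pd g p \<i>))"

definition dzbar :: "(complex \<Rightarrow> cmat) \<Rightarrow> complex \<Rightarrow> cmat" where
  "dzbar g p = smul (1/2) (pd g p 1 + smul \<i> (pd g p \<i>))"

definition rdz :: "(complex \<Rightarrow> real) \<Rightarrow> complex \<Rightarrow> complex" where
  "rdz u p = (1/2) * (complex_of_real (pd u p 1) - \<i> * complex_of_real (pd u p \<i>))"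

definition rdzbar :: "(complex \<Rightarrow> real) \<Rightarrow> complex \<Rightarrow> complex" where
  "rdzbar u p = (1/2) * (complex_of_real (pd u p 1) + \<i> * complex_of_real (pd u p \<i>))"

definition gauss :: "(complex \<Rightarrow> cmat) \<Rightarrow> complex \<Rightarrow> cmat" where
  "gauss F p = smul (-\<i>) (F p ** sigma3 ** matrix_inv (F p))"

definition hopfQ :: "(complex \<Rightarrow> cmat) \<Rightarrow> (complex \<Rightarrow> cmat) \<Rightarrow> complex \<Rightarrow> complex" where
  "hopfQ f N p = cinner (dz (dz f) p) (N p)"

text \<open>A = 1/4 (J dJ + *dJ), J = left mult. by N, *w(X) = w(J_M X), J_M X = i X.\<close>
definition connA :: "(complex \<Rightarrow> cmat) \<Rightarrow> complex \<Rightarrow> complex \<Rightarrow> cmat" where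
  "connA N p X = smul (1/4) (N p ** pd N p X + pd N p (\<i> * X))"

text \<open>A^(1,0) = 1/2 (A - I*A), A^(0,1) = 1/2 (A + I*A), I = multiplication by the scalar i on C^2.\<close>
definition connA10 :: "(complex \<Rightarrow> cmat) \<Rightarrow> complex \<Rightarrow> complex \<Rightarrow> cmat" where
  "connA10 N p X = smul (1/2) (connA N p X - smul \<i> (connA N p (\<i> * X)))"

definition connA01 :: "(complex \<Rightarrow> cmat) \<Rightarrow> complex \<Rightarrow> complex \<Rightarrow> cmat" where
  "connA01 N p X = smul (1/2) (connA N p X + smul \<i> (connA N p (\<i> * X)))"

definition assoc_conn :: "(complex \<Rightarrow> cmat) \<Rightarrow> complex \<Rightarrow> (complex \<Rightarrow> cvec) \<Rightarrow> complex \<Rightarrow> complex \<Rightarrow> cvec" where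
  "assoc_conn N lam psi p X =
     pd psi p X + (smul (lam - 1) (connA10 N p X) + smul (inverse lam - 1) (connA01 N p X)) *v psi p"

definition gauge_conn :: "(complex \<Rightarrow> cmat) \<Rightarrow> (complex \<Rightarrow> complex \<Rightarrow> cmat) \<Rightarrow> (complex \<Rightarrow> cvec) \<Rightarrow> complex \<Rightarrow> complex \<Rightarrow> cvec" where
  "gauge_conn G alpha psi p X =
     G p *v (pd (\<lambda>q. matrix_inv (G q) *v psi q) p X + alpha p X *v (matrix_inv (G p) *v psi p))"

definition mc_form :: "(complex \<Rightarrow> cmat) \<Rightarrow> complex \<Rightarrow> complex \<Rightarrow> cmat" where
  "mc_form G p X = matrix_inv (G p) ** pd G p X"

definition extU :: "complex \<Rightarrow> (complex \<Rightarrow> real) \<Rightarrow> (complex \<Rightarrow> complex) \<Rightarrow> complex \<Rightarrow> cmat" where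
  "extU lam u Q p = mat2 (- rdz u p / 4) (Q p * complex_of_real (exp (- u p / 2)))
                         (- lam / 2 * complex_of_real (exp (u p / 2))) (rdz u p / 4)"

definition extV :: "complex \<Rightarrow> (complex \<Rightarrow> real) \<Rightarrow> (complex \<Rightarrow> complex) \<Rightarrow> complex \<Rightarrow> cmat" where
  "extV lam u Q p = mat2 (rdzbar u p / 4) (inverse lam / 2 * complex_of_real (exp (u p / 2)))
                         (- cnj (Q p) * complex_of_real (exp (- u p / 2))) (- rdzbar u p / 4)"

end

theory Submission
  imports Defs
begin

lemma sum2: "sum f (UNIV::2 set) = f 1 + f 2"
  by (simp add: UNIV_2)

lemma mm_add_r: "((A::cmat) + B) ** C = A ** C + B ** C"
  by (simp add: matrix_matrix_mult_def vec_eq_iff sum.distrib distrib_right)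

lemma bb_mm: "bounded_bilinear ((**) :: cmat \<Rightarrow> cmat \<Rightarrow> cmat)"
  unfolding bilinear_conv_bounded_bilinear[symmetric] bilinear_def
  by (auto intro!: linearI simp: matrix_add_ldistrib mm_add_r matrix_scalar_ac scalar_matrix_assoc)

lemma bb_mv: "bounded_bilinear ((*v) :: cmat \<Rightarrow> cvec \<Rightarrow> cvec)"
  unfolding bilinear_conv_bounded_bilinear[symmetric] bilinear_def
  by (auto intro!: linearI simp: matrix_vector_right_distrib matrix_vector_mult_add_rdistrib
     matrix_vector_mult_def vec_eq_iff sum2 algebra_simps)

lemma bl_smul: "bounded_linear (smul c)"
  unfolding linear_conv_bounded_linear[symmetric]
  by (auto intro!: linearI simp: smul_def vec_eq_iff algebra_simps)

lemma bl_cadj: "bounded_linear cadj"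
  unfolding linear_conv_bounded_linear[symmetric]
  by (auto intro!: linearI simp: cadj_def vec_eq_iff algebra_simps)


lemma smul_mm_l: "smul c A ** B = smul c (A ** (B::cmat))"
  by (simp add: smul_def matrix_matrix_mult_def vec_eq_iff sum_distrib_left mult.assoc)
lemma smul_mm_r: "A ** smul c B = smul c (A ** (B::cmat))"
  by (simp add: smul_def matrix_matrix_mult_def vec_eq_iff sum_distrib_left mult.left_commute)
lemma neg_mm_l: "(- A) ** B = - (A ** (B::cmat))"
  by (simp add: matrix_matrix_mult_def vec_eq_iff sum_negf)
lemma neg_mm_r: "A ** (- B) = - (A ** (B::cmat))"
  by (simp add: matrix_matrix_mult_def vec_eq_iff sum_negf)
lemma diff_mm_l: "(A - B) ** C = A ** C - B ** (C::cmat)"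
  by (simp add: matrix_matrix_mult_def vec_eq_iff sum_subtractf algebra_simps)
lemma diff_mm_r: "A ** (B - C) = A ** B - A ** (C::cmat)"
  by (simp add: matrix_matrix_mult_def vec_eq_iff sum_subtractf algebra_simps)
lemma neg_mv: "(- A) *v v = - ((A::cmat) *v v)"
  by (simp add: matrix_vector_mult_def vec_eq_iff sum_negf)
lemma smul_add: "smul c (A + B) = smul c A + smul c B"
  by (simp add: smul_def vec_eq_iff algebra_simps)
lemma smul_diff: "smul c (A - B) = smul c A - smul c B"
  by (simp add: smul_def vec_eq_iff algebra_simps)
lemma smul_neg: "smul c (- A) = - smul c A"
  by (simp add: smul_def vec_eq_iff algebra_simps)
lemma smul_smul: "smul a (smul b A) = smul (a*b) A"
  by (simp add: smul_def vec_eq_iff algebra_simps)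
lemma smul_zero: "smul c 0 = 0"
  by (simp add: smul_def vec_eq_iff)

lemma inv_props: "invertible (A::cmat) \<Longrightarrow> A ** matrix_inv A = mat 1 \<and> matrix_inv A ** A = mat 1"
  unfolding invertible_def matrix_inv_def by (rule someI_ex)

lemma inv_unique: assumes "A ** B = mat 1" "B ** A = mat 1" shows "matrix_inv (A::cmat) = B"
proof -
  have "invertible A" using assms by (auto simp: invertible_def)
  then have "matrix_inv A ** A = mat 1" using inv_props by blast
  have "matrix_inv A = matrix_inv A ** (A ** B)" using assms by simp
  also have "\<dots> = B" by (simp add: matrix_mul_assoc \<open>matrix_inv A ** A = mat 1\<close>)
  finally show ?thesis .
qed

lemma lin_decomp: assumes "(g has_derivative g') (at p)"
  shows "g' X = Re X *\<^sub>R g' 1 + Im X *\<^sub>R g' \<i>"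
proof -
  have l: "linear g'" using has_derivative_linear[OF assms] .
  have "X = Re X *\<^sub>R 1 + Im X *\<^sub>R \<i>" by (simp add: complex_eq_iff)
  then have "g' X = g' (Re X *\<^sub>R 1 + Im X *\<^sub>R \<i>)" by simp
  also have "\<dots> = Re X *\<^sub>R g' 1 + Im X *\<^sub>R g' \<i>" using l by (simp add: linear_add linear_scale)
  finally show ?thesis .
qed

lemma pd_dz: "pd g p 1 = dz g p + dzbar g p"
  by (simp add: dz_def dzbar_def smul_def vec_eq_iff field_simps)
lemma pd_dzi: "pd g p \<i> = smul \<i> (dz g p - dzbar g p)"
  by (simp add: dz_def dzbar_def smul_def vec_eq_iff field_simps)

lemma frame_decomp:
  assumes D: "(G has_derivative E) (at p)" and a: "Gi ** dz G p = A" and b: "Gi ** dzbar G p = B"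
  shows "Gi ** E h = smul h A + smul (cnj h) B"
proof -
  have pd: "pd G p = E" by (rule ext) (simp add: pd_def frechet_derivative_at[OF D, symmetric])
  have "Gi ** E h = Re h *\<^sub>R (Gi ** E 1) + Im h *\<^sub>R (Gi ** E \<i>)"
    using lin_decomp[OF D, of h] by (simp add: matrix_add_ldistrib matrix_scalar_ac scalar_matrix_assoc[symmetric])
  also have "\<dots> = Re h *\<^sub>R (A + B) + Im h *\<^sub>R smul \<i> (A - B)"
    using a b pd_dz[of G p] pd_dzi[of G p] by (simp add: pd matrix_add_ldistrib smul_mm_r diff_mm_r)
  also have "\<dots> = smul h A + smul (cnj h) B"
    by (simp add: smul_def vec_eq_iff complex_eq_iff algebra_simps)
  finally show ?thesis .
qed


lemma final_id:
  fixes lam X p :: complex and u :: "complex \<Rightarrow> real" and Q :: "complex \<Rightarrow> complex"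
  defines "al \<equiv> \<lambda>h. smul h (extU 1 u Q p) + smul (cnj h) (extV 1 u Q p)"
  defines "be \<equiv> \<lambda>h. smul h (extU lam u Q p) + smul (cnj h) (extV lam u Q p)"
  defines "K \<equiv> \<lambda>h. smul (-\<i>) (al h ** sigma3 - sigma3 ** al h)"
  defines "Aa \<equiv> \<lambda>h. smul (1/4) (smul (-\<i>) sigma3 ** K h + K (\<i>*h))"
  shows "smul (lam-1) (smul (1/2) (Aa X - smul \<i> (Aa (\<i>*X))))
       + smul (inverse lam - 1) (smul (1/2) (Aa X + smul \<i> (Aa (\<i>*X)))) = be X - al X"
  unfolding al_def be_def K_def Aa_def
  apply (simp add: vec_eq_iff forall_2 smul_def matrix_matrix_mult_def sum2 mat2_def sigma3_def
        extU_def extV_def algebra_simps)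
  apply (simp add: field_simps)
  done


theorem lemma4p4:
  fixes U :: "complex set"
    and f F :: "complex \<Rightarrow> cmat"
    and u :: "complex \<Rightarrow> real"
    and Fl :: "complex \<Rightarrow> complex \<Rightarrow> cmat"
  assumes U_open: "open U"
    and f_ImH: "\<forall>p\<in>U. f p \<in> ImH"
    and f_diff: "\<forall>p\<in>U. f differentiable (at p)"
    and f_diff2: "\<forall>p\<in>U. \<forall>v. (\<lambda>q. pd f q v) differentiable (at p)"
    and u_diff: "\<forall>p\<in>U. u differentiable (at p)"
    and F_SU2: "\<forall>p\<in>U. F p \<in> SU2"
    and F_diff: "\<forall>p\<in>U. F differentiable (at p)"
    and frame_x: "\<forall>p\<in>U. smul (complex_of_real (exp (- u p / 2))) (pd f p 1)
                          = smul (-\<i>) (F p ** sigma1 ** matrix_inv (F p))"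
    and frame_y: "\<forall>p\<in>U. smul (complex_of_real (exp (- u p / 2))) (pd f p \<i>)
                          = smul (-\<i>) (F p ** sigma2 ** matrix_inv (F p))"
    and cmc: "\<forall>p\<in>U. \<forall>X. smul (1/2) (pd (gauss F) p X - gauss F p ** pd (gauss F) p (\<i> * X))
                          = - pd f p X"
    and ext_inv: "\<forall>lam. lam \<noteq> 0 \<longrightarrow> (\<forall>p\<in>U. invertible (Fl lam p))"
    and ext_diff: "\<forall>lam. lam \<noteq> 0 \<longrightarrow> (\<forall>p\<in>U. Fl lam differentiable (at p))"
    and ext_z: "\<forall>lam. lam \<noteq> 0 \<longrightarrow> (\<forall>p\<in>U.
                   matrix_inv (Fl lam p) ** dz (Fl lam) p = extU lam u (hopfQ f (gauss F)) p)"
    and ext_zbar: "\<forall>lam. lam \<noteq> 0 \<longrightarrow> (\<forall>p\<in>U.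
                   matrix_inv (Fl lam p) ** dzbar (Fl lam) p = extV lam u (hopfQ f (gauss F)) p)"
    and ext_one: "\<forall>p\<in>U. Fl 1 p = F p"
  shows "\<forall>lam. lam \<noteq> 0 \<longrightarrow> (\<forall>p\<in>U. \<forall>psi :: complex \<Rightarrow> cvec. psi differentiable (at p) \<longrightarrow>
           (\<forall>X. assoc_conn (gauss F) lam psi p X = gauge_conn F (mc_form (Fl lam)) psi p X))"
proof (intro allI impI ballI)
  fix lam :: complex and p :: complex and psi :: "complex \<Rightarrow> cvec" and X :: complex
  assume lam: "lam \<noteq> 0" and pU: "p \<in> U" and psid: "psi differentiable (at p)"
  define Q where "Q = hopfQ f (gauss F)"
  define Fp where "Fp = F p"
  define Fi where "Fi = matrix_inv Fp"
  have su: "cadj Fp ** Fp = mat 1" using F_SU2 pU by (simp add: SU2_def Fp_def)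
  have su2: "Fp ** cadj Fp = mat 1" using su matrix_left_right_inverse by blast
  have Fi_eq: "Fi = cadj Fp" unfolding Fi_def using inv_unique su2 su by blast
  have FiFp: "Fi ** Fp = mat 1" and FpFi: "Fp ** Fi = mat 1" using su su2 Fi_eq by auto
  obtain D where D: "(F has_derivative D) (at p)" using F_diff pU unfolding differentiable_def by blast
  have D1: "(Fl 1 has_derivative D) (at p)"
    by (rule has_derivative_transform_within_open[OF D U_open pU]) (use ext_one in auto)
  define al where "al = (\<lambda>h. smul h (extU 1 u Q p) + smul (cnj h) (extV 1 u Q p))"
  define be where "be = (\<lambda>h. smul h (extU lam u Q p) + smul (cnj h) (extV lam u Q p))"
  have FiD: "Fi ** D h = al h" for h
    unfolding al_def
  proof (rule frame_decomp[OF D1])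
    have e: "Fl 1 p = Fp" using ext_one pU by (simp add: Fp_def)
    show "Fi ** dz (Fl 1) p = extU 1 u Q p"
      using ext_z[rule_format, of 1 p] pU by (simp add: Q_def e Fi_def)
    show "Fi ** dzbar (Fl 1) p = extV 1 u Q p"
      using ext_zbar[rule_format, of 1 p] pU by (simp add: Q_def e Fi_def)
  qed
  have Dal: "D h = Fp ** al h" for h
  proof -
    have "Fp ** (Fi ** D h) = Fp ** al h" using FiD by simp
    thus ?thesis by (simp add: matrix_mul_assoc FpFi)
  qed
  have cD: "((\<lambda>q. cadj (F q)) has_derivative (\<lambda>h. cadj (D h))) (at p)"
    using bounded_linear.has_derivative[OF bl_cadj D] .
  have iD: "((\<lambda>q. matrix_inv (F q)) has_derivative (\<lambda>h. cadj (D h))) (at p)"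
  proof (rule has_derivative_transform_within_open[OF cD U_open pU])
    fix q assume "q \<in> U"
    then have a: "cadj (F q) ** F q = mat 1" using F_SU2 by (simp add: SU2_def)
    then have "F q ** cadj (F q) = mat 1" using matrix_left_right_inverse by blast
    then show "cadj (F q) = matrix_inv (F q)" using inv_unique a by metis
  qed
  have pr: "((\<lambda>q. cadj (F q) ** F q) has_derivative (\<lambda>h. cadj (F p) ** D h + cadj (D h) ** F p)) (at p)"
    using bounded_bilinear.FDERIV[OF bb_mm cD D] .
  have pr2: "((\<lambda>q. mat 1) has_derivative (\<lambda>h. cadj (F p) ** D h + cadj (D h) ** F p)) (at p)"
    by (rule has_derivative_transform_within_open[OF pr U_open pU]) (use F_SU2 in \<open>simp add: SU2_def\<close>)
  have z: "(\<lambda>h. cadj (F p) ** D h + cadj (D h) ** F p) = (\<lambda>h. 0)"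
    using has_derivative_unique[OF pr2 has_derivative_const] .
  have Di: "cadj (D h) = - (al h ** Fi)" for h
  proof -
    have "cadj Fp ** D h + cadj (D h) ** Fp = 0" using fun_cong[OF z, of h] by (simp add: Fp_def)
    then have "cadj (D h) ** Fp = - (Fi ** D h)" using Fi_eq by (simp add: eq_neg_iff_add_eq_0 add.commute)
    then have "cadj (D h) ** Fp ** Fi = - (al h ** Fi)" using FiD by (simp add: neg_mm_l)
    then show ?thesis by (simp add: matrix_mul_assoc[symmetric] FpFi)
  qed
  define T where "T = (\<lambda>Y. Fp ** Y ** Fi)"
  have T_mm: "T Y ** T Z = T (Y ** Z)" for Y Z
  proof -
    have "T Y ** T Z = Fp ** Y ** (Fi ** Fp) ** Z ** Fi" by (simp add: T_def matrix_mul_assoc)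
    thus ?thesis by (simp add: FiFp T_def matrix_mul_assoc)
  qed
  have T_add: "T Y + T Z = T (Y + Z)" for Y Z
    by (simp add: T_def matrix_add_ldistrib mm_add_r)
  have T_diff: "T Y - T Z = T (Y - Z)" for Y Z
    by (simp add: T_def diff_mm_l diff_mm_r)
  have T_smul: "smul c (T Y) = T (smul c Y)" for c Y
    by (simp add: T_def smul_mm_l smul_mm_r)
  have geq: "gauss F = (\<lambda>q. smul (-\<i>) (F q ** sigma3 ** matrix_inv (F q)))"
    by (rule ext) (simp add: gauss_def)
  have gD: "(gauss F has_derivative
      (\<lambda>h. smul (-\<i>) (F p ** sigma3 ** cadj (D h) + (F p ** 0 + D h ** sigma3) ** matrix_inv (F p)))) (at p)"
    unfolding geq
    by (intro bounded_linear.has_derivative[OF bl_smul] bounded_bilinear.FDERIV[OF bb_mm] has_derivative_const D iD)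
  define K where "K = (\<lambda>h. smul (-\<i>) (al h ** sigma3 - sigma3 ** al h))"
  have pdN: "pd (gauss F) p h = T (K h)" for h
  proof -
    have "pd (gauss F) p h = smul (-\<i>) (F p ** sigma3 ** cadj (D h) + (F p ** 0 + D h ** sigma3) ** matrix_inv (F p))"
      by (simp add: pd_def frechet_derivative_at[OF gD, symmetric])
    also have "\<dots> = T (K h)"
      unfolding T_def K_def Di Fp_def[symmetric] Fi_def[symmetric] unfolding Dal
      by (simp add: smul_mm_l smul_mm_r diff_mm_l diff_mm_r neg_mm_l neg_mm_r matrix_mul_assoc
          smul_diff smul_add smul_neg algebra_simps)
    finally show ?thesis .
  qed
  have Np: "gauss F p = T (smul (-\<i>) sigma3)"
    by (simp add: gauss_def T_def smul_mm_l smul_mm_r Fp_def Fi_def)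
  define Aa where "Aa = (\<lambda>h. smul (1/4) (smul (-\<i>) sigma3 ** K h + K (\<i>*h)))"
  have cA: "connA (gauss F) p h = T (Aa h)" for h
    unfolding connA_def Aa_def by (simp add: Np pdN T_mm T_add T_smul)
  have LHSm: "smul (lam - 1) (connA10 (gauss F) p X) + smul (inverse lam - 1) (connA01 (gauss F) p X)
     = T (be X - al X)"
  proof -
    have "smul (lam - 1) (connA10 (gauss F) p X) + smul (inverse lam - 1) (connA01 (gauss F) p X)
      = T (smul (lam-1) (smul (1/2) (Aa X - smul \<i> (Aa (\<i>*X))))
       + smul (inverse lam - 1) (smul (1/2) (Aa X + smul \<i> (Aa (\<i>*X)))))"
      unfolding connA10_def connA01_def by (simp add: cA T_add T_diff T_smul)
    also have "\<dots> = T (be X - al X)"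
      unfolding Aa_def K_def al_def be_def by (simp only: final_id)
    finally show ?thesis .
  qed
  obtain P where P: "(psi has_derivative P) (at p)" using psid unfolding differentiable_def by blast
  have pdpsi: "pd psi p X = P X" by (simp add: pd_def frechet_derivative_at[OF P, symmetric])
  have vD: "((\<lambda>q. matrix_inv (F q) *v psi q) has_derivative (\<lambda>h. matrix_inv (F p) *v P h + cadj (D h) *v psi p)) (at p)"
    using bounded_bilinear.FDERIV[OF bb_mv iD P] .
  have pdv: "pd (\<lambda>q. matrix_inv (F q) *v psi q) p X = Fi *v P X + cadj (D X) *v psi p"
    by (simp add: pd_def frechet_derivative_at[OF vD, symmetric] Fi_def Fp_def)
  obtain E where E: "(Fl lam has_derivative E) (at p)" using ext_diff lam pU unfolding differentiable_def by blast
  have mc: "mc_form (Fl lam) p X = be X"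
  proof -
    have pE: "pd (Fl lam) p = E" by (rule ext) (simp add: pd_def frechet_derivative_at[OF E, symmetric])
    have "matrix_inv (Fl lam p) ** E X = be X"
      unfolding be_def
    proof (rule frame_decomp[OF E])
      show "matrix_inv (Fl lam p) ** dz (Fl lam) p = extU lam u Q p"
        using ext_z lam pU by (simp add: Q_def)
      show "matrix_inv (Fl lam p) ** dzbar (Fl lam) p = extV lam u Q p"
        using ext_zbar lam pU by (simp add: Q_def)
    qed
    then show ?thesis by (simp add: mc_form_def pE)
  qed
  have "gauge_conn F (mc_form (Fl lam)) psi p X
      = Fp *v (Fi *v P X + cadj (D X) *v psi p + be X *v (Fi *v psi p))"
    unfolding gauge_conn_def by (simp add: pdv mc Fp_def Fi_def)
  also have "\<dots> = P X + (Fp ** cadj (D X)) *v psi p + (Fp ** be X ** Fi) *v psi p"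
    by (simp add: matrix_vector_right_distrib matrix_vector_mul_assoc FpFi matrix_mul_assoc)
  also have "\<dots> = P X + T (be X - al X) *v psi p"
    unfolding Di T_def by (simp add: neg_mm_r matrix_mul_assoc diff_mm_l diff_mm_r
        matrix_vector_mult_add_rdistrib matrix_vector_right_distrib neg_mv algebra_simps)
  finally have R: "gauge_conn F (mc_form (Fl lam)) psi p X = P X + T (be X - al X) *v psi p" .
  show "assoc_conn (gauss F) lam psi p X = gauge_conn F (mc_form (Fl lam)) psi p X"
    unfolding R assoc_conn_def pdpsi LHSm ..
qed

end
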